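(* Let $M$ be a 3-dimensional contact Sub-Riemannian manifold, $W$ a $C^2$ $\Delta$-minimal surface and $\hat q\in W$ a characteristic point. Choose local coordinates $(x,y,z)$ near $\hat q=0$ with $W=\{z=0\}$, $X_1(\hat q)=\partial_x$, $X_2(\hat q)=\partial_y$, and write $a_i=dz(X_i)$, $i=1,2$ (so $a_i(0)=0$). Let $$A=\begin{pmatrix}\partial_xa_1&\partial_ya_1\\ \partial_xa_2&\partial_ya_2\end{pmatrix}(0)=\begin{pmatrix}a&b\\ c&d\end{pmatrix}.$$ If $\hat q$ is an isolated characteristic point and $\det A\ne0$, then $a=d=0$, $b=-c$, and $\det A=c^2>0$; that is, $\hat q$ is a zero of index $+1$ of the map $W\ni q\mapsto(X_1F(q),X_2F(q))$, $F=z$. In particular the structure functions $c_{12}^1,c_{12}^2$ do not affect the index.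
   Context: $M$: smooth 3-manifold with a contact rank-2 distribution $\Delta$ with orthonormal frame $X_1,X_2$; canonical 1-form $\omega$ with $\omega(\Delta)=0$, $d\omega(X_1,X_2)=1$; Reeb field $X_3$ ($\omega(X_3)=1$, $d\omega(V,X_3)=0$ for $V\in\Delta$); structure functions $[X_i,X_j]=-\sum_kc_{ij}^kX_k$. For $W=\{F=0\}$ ($F\in C^2$, $dF\ne0$), a characteristic point is a point where $X_1F=X_2F=0$. $W$ is $\Delta$-minimal if at all points of $W$ with $D_1=\sqrt{(X_1F)^2+(X_2F)^2}\neq0$: $\big(X_1^2F(X_2F)^2+X_2^2F(X_1F)^2-X_1FX_2F(X_1X_2+X_2X_1)F\big)D_1^{-3}+(c_{12}^2X_1F-c_{12}^1X_2F)D_1^{-1}=0$ (a property of $W$, independent of the defining function). *)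

theory Defs
  imports "HOL-Analysis.Analysis"
begin

text \<open>Local coordinates (x,y,z) on an open set U of R^3; vector fields and 1-forms
  are maps real^3 => real^3 (a 1-form is identified with a covector via the inner product).\<close>

type_synonym vfield = "real^3 \<Rightarrow> real^3"

definition C1_on :: "(real^3) set \<Rightarrow> (real^3 \<Rightarrow> 'b::real_normed_vector) \<Rightarrow> bool" where
  "C1_on U f \<longleftrightarrow> (\<forall>p\<in>U. f differentiable (at p)) \<and>
     (\<forall>v. continuous_on U (\<lambda>p. frechet_derivative f (at p) v))"

definition vf_apply :: "vfield \<Rightarrow> (real^3 \<Rightarrow> real) \<Rightarrow> real^3 \<Rightarrow> real" where
  "vf_apply X f p = frechet_derivative f (at p) (X p)"

definition lie :: "vfield \<Rightarrow> vfield \<Rightarrow> vfield" where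
  "lie X Y p = frechet_derivative Y (at p) (X p) - frechet_derivative X (at p) (Y p)"

definition dform :: "(real^3 \<Rightarrow> real^3) \<Rightarrow> real^3 \<Rightarrow> real^3 \<Rightarrow> real^3 \<Rightarrow> real" where
  "dform w p u v = frechet_derivative w (at p) u \<bullet> v - frechet_derivative w (at p) v \<bullet> u"

definition char_pt :: "vfield \<Rightarrow> vfield \<Rightarrow> (real^3 \<Rightarrow> real) \<Rightarrow> real^3 \<Rightarrow> bool" where
  "char_pt X1 X2 F q \<longleftrightarrow> vf_apply X1 F q = 0 \<and> vf_apply X2 F q = 0"

definition Delta_minimal ::
  "vfield \<Rightarrow> vfield \<Rightarrow> (real^3 \<Rightarrow> real) \<Rightarrow> (real^3 \<Rightarrow> real) \<Rightarrow> (real^3 \<Rightarrow> real) \<Rightarrow> (real^3) set \<Rightarrow> bool" where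
  "Delta_minimal X1 X2 c1 c2 F W \<longleftrightarrow>
    (\<forall>q\<in>W. let p1 = vf_apply X1 F q; p2 = vf_apply X2 F q; D = sqrt (p1\<^sup>2 + p2\<^sup>2) in
       D \<noteq> 0 \<longrightarrow>
       (vf_apply X1 (vf_apply X1 F) q * p2\<^sup>2 + vf_apply X2 (vf_apply X2 F) q * p1\<^sup>2
          - p1 * p2 * (vf_apply X1 (vf_apply X2 F) q + vf_apply X2 (vf_apply X1 F) q)) / D ^ 3
       + (c2 q * p1 - c1 q * p2) / D = 0)"

end

theory Submission
  imports Defs
begin


lemma lin_expand:
  fixes f :: "real^'n \<Rightarrow> 'b::real_normed_vector"
  assumes "linear f"
  shows "f v = (\<Sum>i\<in>UNIV. (v$i) *\<^sub>R f (axis i 1))"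
proof -
  have "v = (\<Sum>i\<in>UNIV. (v$i) *\<^sub>R axis i 1)"
    using basis_expansion[of v] by (simp add: scalar_mult_eq_scaleR)
  hence "f v = f (\<Sum>i\<in>UNIV. (v$i) *\<^sub>R axis i 1)" by simp
  also have "\<dots> = (\<Sum>i\<in>UNIV. (v$i) *\<^sub>R f (axis i 1))"
    using assms by (simp add: linear_sum linear_scale)
  finally show ?thesis .
qed

lemma C1_cont_apply:
  fixes f :: "real^3 \<Rightarrow> 'b::real_normed_vector"
  assumes C: "C1_on U f" and U: "open U" "p \<in> U" and v: "continuous (at p) v"
  shows "continuous (at p) (\<lambda>q. frechet_derivative f (at q) (v q))"
proof -
  have e: "\<forall>\<^sub>F q in at p. (\<Sum>i\<in>UNIV. (v q$i) *\<^sub>R frechet_derivative f (at q) (axis i 1))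
            = frechet_derivative f (at q) (v q)"
  proof -
    have "\<forall>\<^sub>F q in at p. q \<in> U" using U eventually_at_topological by blast
    thus ?thesis
    proof eventually_elim
      case (elim q)
      hence "linear (frechet_derivative f (at q))"
        using C unfolding C1_on_def
        by (meson frechet_derivative_works has_derivative_linear)
      thus ?case using lin_expand by metis
    qed
  qed
  have lin0: "linear (frechet_derivative f (at p))"
    using C U unfolding C1_on_def by (meson frechet_derivative_works has_derivative_linear)
  have c: "continuous (at p) (\<lambda>q. (\<Sum>i\<in>UNIV. (v q$i) *\<^sub>R frechet_derivative f (at q) (axis i 1)))"
  proof (rule continuous_sum, rule continuous_scaleR)
    fix i
    show "continuous (at p) (\<lambda>q. v q $ i)" using v unfolding continuous_at by (rule tendsto_vec_nth)
    show "continuous (at p) (\<lambda>q. frechet_derivative f (at q) (axis i 1))"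
      using C U unfolding C1_on_def by (meson continuous_on_eq_continuous_at)
  qed
  show ?thesis
    unfolding continuous_at
    using c e lin_expand[OF lin0, of "v p"] unfolding continuous_at
    by (auto intro: Lim_transform_eventually)
qed


lemma Dcomp3:
  fixes X :: "real^3 \<Rightarrow> real^3"
  assumes "X differentiable (at q)"
  shows "((\<lambda>p. X p $ 3) has_derivative (\<lambda>v. frechet_derivative X (at q) v $ 3)) (at q)"
    and "frechet_derivative (\<lambda>p. X p $ 3) (at q) = (\<lambda>v. frechet_derivative X (at q) v $ 3)"
proof -
  show h: "((\<lambda>p. X p $ 3) has_derivative (\<lambda>v. frechet_derivative X (at q) v $ 3)) (at q)"
    using bounded_linear.has_derivative[OF bounded_linear_vec_nth frechet_derivative_works[THEN iffD1, OF assms]]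
    by simp
  show "frechet_derivative (\<lambda>p. X p $ 3) (at q) = (\<lambda>v. frechet_derivative X (at q) v $ 3)"
    using frechet_derivative_at[OF h] by simp
qed

lemma vfF: "vf_apply X (\<lambda>p. p $ 3) = (\<lambda>q. X q $ 3)"
proof -
  have "\<And>q. frechet_derivative (\<lambda>p::real^3. p $ 3) (at q) = (\<lambda>v. v $ 3)"
    using frechet_derivative_at[OF bounded_linear_imp_has_derivative[OF bounded_linear_vec_nth]]
    by metis
  thus ?thesis unfolding vf_apply_def by (intro ext) simp
qed

lemma alg:
  fixes a b c d :: real
  assumes Q: "\<And>x y. a*(c*x+d*y)^2 + d*(a*x+b*y)^2 - (a*x+b*y)*(c*x+d*y)*(c+b) = 0"
    and det: "a*d - b*c \<noteq> 0"
  shows "a = 0 \<and> d = 0 \<and> b = - c"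
proof -
  have "d*(a*d-b*c)^2 = 0" using Q[of d "-c"] by (simp add: algebra_simps power2_eq_square)
  hence d: "d = 0" using det by simp
  have "a*(a*d-b*c)^2 = 0" using Q[of "-b" a] by (simp add: algebra_simps power2_eq_square)
  hence a: "a = 0" using det by simp
  have "(b*c)*(c+b) = 0" using Q[of 1 1] a d by (simp add: algebra_simps power2_eq_square)
  hence "b = -c" using det a d by simp
  thus ?thesis using a d by simp
qed


lemma alg2:
  fixes m11 m22 m12 m21 k1 k2 t r1 r2 :: real
  assumes "(m11 * (t*r2)^2 + m22 * (t*r1)^2 - t*r1*(t*r2)*(m12+m21)) / sqrt ((t*r1)^2 + (t*r2)^2) ^ 3
     + (k2*(t*r1) - k1*(t*r2)) / sqrt ((t*r1)^2 + (t*r2)^2) = 0"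
    and "sqrt ((t*r1)^2 + (t*r2)^2) \<noteq> 0" and "t \<noteq> 0"
  shows "m11 * r2^2 + m22 * r1^2 - r1*r2*(m12+m21) + (k2*(t*r1) - k1*(t*r2))*(r1^2+r2^2) = 0"
proof -
  define D where "D = sqrt ((t*r1)^2 + (t*r2)^2)"
  have D2: "D^2 = (t*r1)^2 + (t*r2)^2" unfolding D_def by simp
  have Dnz: "D \<noteq> 0" using assms(2) D_def by simp
  have "(m11 * (t*r2)^2 + m22 * (t*r1)^2 - t*r1*(t*r2)*(m12+m21)) / D^3 + (k2*(t*r1) - k1*(t*r2)) / D = 0"
    using assms(1) D_def by simp
  moreover have "\<And>M K. D^3 * (M / D^3 + K / D) = M + K * D^2"
    using Dnz by (simp add: distrib_left power2_eq_square power3_eq_cube)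
  ultimately have "(m11 * (t*r2)^2 + m22 * (t*r1)^2 - t*r1*(t*r2)*(m12+m21)) + (k2*(t*r1) - k1*(t*r2)) * D^2 = 0"
    by (metis mult_zero_right)
  hence "t^2 * (m11 * r2^2 + m22 * r1^2 - r1*r2*(m12+m21) + (k2*(t*r1) - k1*(t*r2))*(r1^2+r2^2)) = 0"
    unfolding D2 by (simp add: algebra_simps power2_eq_square)
  thus ?thesis using assms(3) by simp
qed



theorem mainTheorem9:
  fixes U :: "(real^3) set"
    and X1 X2 X3 \<omega> :: vfield
    and c1 c2 c3 :: "real^3 \<Rightarrow> real"
    and a b c d :: real
  assumes U: "open U" "0 \<in> U"
    and reg: "C1_on U X1" "C1_on U X2" "C1_on U \<omega>"
    and contact: "\<forall>p\<in>U. \<forall>\<alpha> \<beta> \<gamma>::real.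
         \<alpha> *\<^sub>R X1 p + \<beta> *\<^sub>R X2 p + \<gamma> *\<^sub>R lie X1 X2 p = 0 \<longrightarrow> \<alpha> = 0 \<and> \<beta> = 0 \<and> \<gamma> = 0"
    and omega: "\<forall>p\<in>U. \<omega> p \<bullet> X1 p = 0 \<and> \<omega> p \<bullet> X2 p = 0 \<and> dform \<omega> p (X1 p) (X2 p) = 1"
    and reeb: "\<forall>p\<in>U. \<omega> p \<bullet> X3 p = 1 \<and> (\<forall>V\<in>span {X1 p, X2 p}. dform \<omega> p V (X3 p) = 0)"
    and struct: "\<forall>p\<in>U. lie X1 X2 p = - (c1 p *\<^sub>R X1 p + c2 p *\<^sub>R X2 p + c3 p *\<^sub>R X3 p)"
    and frame0: "X1 0 = axis 1 1" "X2 0 = axis 2 1"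
    and minimal: "Delta_minimal X1 X2 c1 c2 (\<lambda>p. p $ 3) {p\<in>U. p $ 3 = 0}"
    and charpt: "char_pt X1 X2 (\<lambda>p. p $ 3) 0"
    and isolated: "\<exists>\<epsilon>>0. \<forall>q\<in>{p\<in>U. p $ 3 = 0}. 0 < norm q \<and> norm q < \<epsilon> \<longrightarrow>
                      \<not> char_pt X1 X2 (\<lambda>p. p $ 3) q"
    and a_def: "a = frechet_derivative (\<lambda>p. X1 p $ 3) (at 0) (axis 1 1)"
    and b_def: "b = frechet_derivative (\<lambda>p. X1 p $ 3) (at 0) (axis 2 1)"
    and c_def: "c = frechet_derivative (\<lambda>p. X2 p $ 3) (at 0) (axis 1 1)"
    and d_def: "d = frechet_derivative (\<lambda>p. X2 p $ 3) (at 0) (axis 2 1)"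
    and detA: "det (vector [vector [a, b], vector [c, d]] :: real^2^2) \<noteq> 0"
  shows "a = 0 \<and> d = 0 \<and> b = - c \<and>
         det (vector [vector [a, b], vector [c, d]] :: real^2^2) = c\<^sup>2 \<and> c\<^sup>2 > 0"
proof -
  have X1d: "\<And>q. q \<in> U \<Longrightarrow> X1 differentiable (at q)" using reg(1) unfolding C1_on_def by blast
  have X2d: "\<And>q. q \<in> U \<Longrightarrow> X2 differentiable (at q)" using reg(2) unfolding C1_on_def by blast
  have wd: "\<And>q. q \<in> U \<Longrightarrow> \<omega> differentiable (at q)" using reg(3) unfolding C1_on_def by blast
  define g1 where "g1 = (\<lambda>p. X1 p $ 3)"
  define g2 where "g2 = (\<lambda>p. X2 p $ 3)"
  define b11 where "b11 q = frechet_derivative X1 (at q) (X1 q) $ 3" for q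
  define b22 where "b22 q = frechet_derivative X2 (at q) (X2 q) $ 3" for q
  define b12 where "b12 q = frechet_derivative X2 (at q) (X1 q) $ 3" for q
  define b21 where "b21 q = frechet_derivative X1 (at q) (X2 q) $ 3" for q
  have beq: "vf_apply X1 (vf_apply X1 (\<lambda>p. p $ 3)) q = b11 q \<and> vf_apply X2 (vf_apply X2 (\<lambda>p. p $ 3)) q = b22 q
     \<and> vf_apply X1 (vf_apply X2 (\<lambda>p. p $ 3)) q = b12 q \<and> vf_apply X2 (vf_apply X1 (\<lambda>p. p $ 3)) q = b21 q"
    if "q \<in> U" for q
    unfolding vfF unfolding vf_apply_def b11_def b22_def b12_def b21_def
    using Dcomp3(2)[OF X1d[OF that]] Dcomp3(2)[OF X2d[OF that]] by simp
  have gF: "vf_apply X1 (\<lambda>p. p $ 3) = g1" "vf_apply X2 (\<lambda>p. p $ 3) = g2" unfolding g1_def g2_def vfF by auto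
  have cX1: "continuous (at 0) X1" using X1d[OF U(2)] differentiable_imp_continuous_within by blast
  have cX2: "continuous (at 0) X2" using X2d[OF U(2)] differentiable_imp_continuous_within by blast
  have c3: "continuous (at 0) (\<lambda>q. v q $ 3)" if "continuous (at 0) v" for v :: "real^3 \<Rightarrow> real^3"
    using that unfolding continuous_at by (rule tendsto_vec_nth)
  have cb: "continuous (at 0) b11" "continuous (at 0) b22" "continuous (at 0) b12" "continuous (at 0) b21"
    unfolding b11_def b22_def b12_def b21_def
    by (rule c3, rule C1_cont_apply[OF reg(1) U] C1_cont_apply[OF reg(2) U], rule cX1 cX2)+
  have b0: "b11 0 = a" "b22 0 = d" "b12 0 = c" "b21 0 = b"
    unfolding b11_def b22_def b12_def b21_def a_def b_def c_def d_def frame0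
    using Dcomp3(2)[OF X1d[OF U(2)]] Dcomp3(2)[OF X2d[OF U(2)]] by simp_all
  define R1 where "R1 q = - dform \<omega> q (lie X1 X2 q) (X2 q)" for q
  define R2 where "R2 q = - dform \<omega> q (X1 q) (lie X1 X2 q)" for q
  have Req: "c1 q = R1 q \<and> c2 q = R2 q" if q: "q \<in> U" for q
  proof -
    define Dw where "Dw = frechet_derivative \<omega> (at q)"
    have lin: "linear Dw" unfolding Dw_def using wd[OF q]
      by (meson frechet_derivative_works has_derivative_linear)
    have L: "lie X1 X2 q = - (c1 q *\<^sub>R X1 q + c2 q *\<^sub>R X2 q + c3 q *\<^sub>R X3 q)" using struct q by blast
    have DL: "Dw (lie X1 X2 q) = - (c1 q *\<^sub>R Dw (X1 q) + c2 q *\<^sub>R Dw (X2 q) + c3 q *\<^sub>R Dw (X3 q))"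
      unfolding L linear_neg[OF lin] linear_add[OF lin] linear_scale[OF lin] ..
    have o1: "Dw (X1 q) \<bullet> X2 q - Dw (X2 q) \<bullet> X1 q = 1" using omega q unfolding dform_def Dw_def by blast
    have r1: "Dw (X1 q) \<bullet> X3 q - Dw (X3 q) \<bullet> X1 q = 0"
      using reeb q span_base[of "X1 q" "{X1 q, X2 q}"] unfolding dform_def Dw_def by blast
    have r2: "Dw (X2 q) \<bullet> X3 q - Dw (X3 q) \<bullet> X2 q = 0"
      using reeb q span_base[of "X2 q" "{X1 q, X2 q}"] unfolding dform_def Dw_def by blast
    have "R1 q = c1 q * (Dw (X1 q) \<bullet> X2 q - Dw (X2 q) \<bullet> X1 q) - c3 q * (Dw (X2 q) \<bullet> X3 q - Dw (X3 q) \<bullet> X2 q)"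
      unfolding R1_def dform_def Dw_def[symmetric] DL
      by (subst L) (simp add: inner_add_left inner_add_right algebra_simps)
    moreover have "R2 q = c2 q * (Dw (X1 q) \<bullet> X2 q - Dw (X2 q) \<bullet> X1 q) + c3 q * (Dw (X1 q) \<bullet> X3 q - Dw (X3 q) \<bullet> X1 q)"
      unfolding R2_def dform_def Dw_def[symmetric] DL
      by (subst L) (simp add: inner_add_left inner_add_right algebra_simps)
    ultimately show ?thesis using o1 r1 r2 by simp
  qed
  have cL: "continuous (at 0) (lie X1 X2)"
    unfolding lie_def[abs_def]
    by (intro continuous_diff C1_cont_apply[OF reg(1) U] C1_cont_apply[OF reg(2) U] cX1 cX2)
  have cdf: "continuous (at 0) (\<lambda>q. dform \<omega> q (u q) (v q))"
    if "continuous (at 0) u" "continuous (at 0) v" for u v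
    unfolding dform_def
    by (intro continuous_diff continuous_inner C1_cont_apply[OF reg(3) U] that)
  have cR: "continuous (at 0) R1" "continuous (at 0) R2"
    unfolding R1_def[abs_def] R2_def[abs_def]
    by (intro continuous_minus cdf cL cX1 cX2)+
  have G1: "(g1 has_derivative (\<lambda>v. frechet_derivative X1 (at 0) v $ 3)) (at 0)"
    "frechet_derivative g1 (at 0) = (\<lambda>v. frechet_derivative X1 (at 0) v $ 3)"
    unfolding g1_def using Dcomp3[OF X1d[OF U(2)]] by auto
  have G2: "(g2 has_derivative (\<lambda>v. frechet_derivative X2 (at 0) v $ 3)) (at 0)"
    "frechet_derivative g2 (at 0) = (\<lambda>v. frechet_derivative X2 (at 0) v $ 3)"
    unfolding g2_def using Dcomp3[OF X2d[OF U(2)]] by auto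
  have g0: "g1 0 = 0" "g2 0 = 0" unfolding g1_def g2_def frame0 by (simp_all add: axis_def)
  have key: "a*(c*x+d*y)^2 + d*(a*x+b*y)^2 - (a*x+b*y)*(c*x+d*y)*(c+b) = 0" for x y
  proof (cases "a*x+b*y = 0 \<and> c*x+d*y = 0")
    case True thus ?thesis by simp
  next
    case False
    define u where "u = a*x+b*y"
    define v where "v = c*x+d*y"
    define w :: "real^3" where "w = x *\<^sub>R axis 1 1 + y *\<^sub>R axis 2 1"
    define \<gamma> where "\<gamma> t = t *\<^sub>R w" for t :: real
    have gt: "(\<gamma> \<longlongrightarrow> 0) (at_right 0)"
    proof -
      have "((\<lambda>t. t *\<^sub>R w) \<longlongrightarrow> (0::real) *\<^sub>R w) (at_right 0)" by (intro tendsto_intros)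
      thus ?thesis unfolding \<gamma>_def[abs_def] by simp
    qed
    have evU: "\<forall>\<^sub>F t in at_right 0. \<gamma> t \<in> U" using gt U topological_tendstoD by blast
    have w3: "\<gamma> t $ 3 = 0" for t unfolding \<gamma>_def w_def by (simp add: axis_def)
    have rlim: "((\<lambda>t. g (\<gamma> t) / t) \<longlongrightarrow> G w) (at_right 0)"
      if hg: "(g has_derivative G) (at 0)" and g00: "g 0 = 0" for g :: "real^3 \<Rightarrow> real" and G
    proof -
      have lG: "linear G" using hg has_derivative_linear by blast
      have h1: "((\<lambda>t::real. t *\<^sub>R w) has_derivative (\<lambda>t. t *\<^sub>R w)) (at 0)"
        by (rule bounded_linear_imp_has_derivative[OF bounded_linear_scaleR_left])
      have hg': "(g has_derivative G) (at ((0::real) *\<^sub>R w))" using hg by simp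
      have "((\<lambda>t. g (t *\<^sub>R w)) has_derivative (\<lambda>h. G (h *\<^sub>R w))) (at 0)"
        using has_derivative_compose[OF h1 hg'] by simp
      moreover have "(\<lambda>h. G (h *\<^sub>R w)) = (*) (G w)"
        using lG by (auto simp: linear_scale)
      ultimately have "((\<lambda>t. g (t *\<^sub>R w)) has_field_derivative G w) (at 0)"
        unfolding has_field_derivative_def by simp
      hence "((\<lambda>t. (g (t *\<^sub>R w) - g (0 *\<^sub>R w)) / (t - 0)) \<longlongrightarrow> G w) (at 0)"
        unfolding has_field_derivative_iff by simp
      hence "((\<lambda>t. g (\<gamma> t) / t) \<longlongrightarrow> G w) (at 0)" using g00 unfolding \<gamma>_def by simp
      thus ?thesis using tendsto_mono[OF at_le[OF subset_UNIV]] by blast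
    qed
    have Gw1: "frechet_derivative X1 (at 0) w $ 3 = u"
    proof -
      have l: "linear (\<lambda>v. frechet_derivative X1 (at 0) v $ 3)" using G1(1) has_derivative_linear by blast
      show ?thesis unfolding w_def a_def b_def u_def Dcomp3(2)[OF X1d[OF U(2)]]
        using linear_add[OF l] linear_scale[OF l] by (simp add: mult.commute)
    qed
    have Gw2: "frechet_derivative X2 (at 0) w $ 3 = v"
    proof -
      have l: "linear (\<lambda>v. frechet_derivative X2 (at 0) v $ 3)" using G2(1) has_derivative_linear by blast
      show ?thesis unfolding w_def c_def d_def v_def Dcomp3(2)[OF X2d[OF U(2)]]
        using linear_add[OF l] linear_scale[OF l] by (simp add: mult.commute)
    qed
    define r1 where "r1 t = g1 (\<gamma> t) / t" for t
    define r2 where "r2 t = g2 (\<gamma> t) / t" for t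
    have r1l: "(r1 \<longlongrightarrow> u) (at_right 0)"
      using rlim[OF G1(1) g0(1)] unfolding Gw1 r1_def[abs_def] .
    have r2l: "(r2 \<longlongrightarrow> v) (at_right 0)"
      using rlim[OF G2(1) g0(2)] unfolding Gw2 r2_def[abs_def] .
    have cl: "((\<lambda>t. h (\<gamma> t)) \<longlongrightarrow> h 0) (at_right 0)" if "continuous (at 0) h" for h :: "real^3 \<Rightarrow> real"
      using isCont_tendsto_compose[OF that gt] .
    define E where "E t = b11 (\<gamma> t) * (r2 t)^2 + b22 (\<gamma> t) * (r1 t)^2 - r1 t * r2 t * (b12 (\<gamma> t) + b21 (\<gamma> t))
       + (R2 (\<gamma> t) * (t * r1 t) - R1 (\<gamma> t) * (t * r2 t)) * ((r1 t)^2 + (r2 t)^2)" for t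
    have El: "(E \<longlongrightarrow> b11 0 * v^2 + b22 0 * u^2 - u * v * (b12 0 + b21 0)
       + (R2 0 * (0 * u) - R1 0 * (0 * v)) * (u^2 + v^2)) (at_right 0)"
      unfolding E_def[abs_def]
      by (intro tendsto_intros cl cb cR r1l r2l)
    have evnz: "\<forall>\<^sub>F t in at_right 0. r1 t \<noteq> 0 \<or> r2 t \<noteq> 0"
    proof (cases "u = 0")
      case True
      hence "v \<noteq> 0" using False u_def v_def by auto
      hence "\<forall>\<^sub>F t in at_right 0. r2 t \<noteq> 0" using tendsto_imp_eventually_ne[OF r2l] by blast
      thus ?thesis by (rule eventually_mono) simp
    next
      case False
      hence "\<forall>\<^sub>F t in at_right 0. r1 t \<noteq> 0" using tendsto_imp_eventually_ne[OF r1l] by blast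
      thus ?thesis by (rule eventually_mono) simp
    qed
    have evE: "\<forall>\<^sub>F t in at_right 0. E t = 0"
      using evU evnz eventually_at_right_less[of "0::real"]
    proof eventually_elim
      case (elim t)
      let ?q = "\<gamma> t"
      have qW: "?q \<in> {p \<in> U. p $ 3 = 0}" using elim w3 by simp
      have p1: "g1 ?q = t * r1 t" "g2 ?q = t * r2 t" using elim unfolding r1_def r2_def by auto
      have "(t * r1 t)^2 + (t * r2 t)^2 > 0" using elim by (auto simp: add_pos_nonneg add_nonneg_pos)
      hence "sqrt ((t * r1 t)^2 + (t * r2 t)^2) > 0" by (rule real_sqrt_gt_zero)
      hence Dnz: "sqrt ((t * r1 t)^2 + (t * r2 t)^2) \<noteq> 0" by linarith
      have eq: "(b11 ?q * (t * r2 t)^2 + b22 ?q * (t * r1 t)^2 - t * r1 t * (t * r2 t) * (b12 ?q + b21 ?q))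
           / sqrt ((t * r1 t)^2 + (t * r2 t)^2) ^ 3
         + (R2 ?q * (t * r1 t) - R1 ?q * (t * r2 t)) / sqrt ((t * r1 t)^2 + (t * r2 t)^2) = 0"
      proof -
        have qU: "?q \<in> U" using elim by simp
        have bb: "vf_apply X1 g1 ?q = b11 ?q" "vf_apply X2 g2 ?q = b22 ?q"
          "vf_apply X1 g2 ?q = b12 ?q" "vf_apply X2 g1 ?q = b21 ?q"
          using beq[OF qU] unfolding gF by auto
        have cc: "c1 ?q = R1 ?q" "c2 ?q = R2 ?q" using Req[OF qU] by auto
        show ?thesis
          using bspec[OF minimal[unfolded Delta_minimal_def] qW] Dnz
          unfolding Let_def gF p1 bb cc by (simp, blast)
      qed
      show ?case unfolding E_def using alg2[OF eq] elim by simp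
    qed
    have "b11 0 * v^2 + b22 0 * u^2 - u * v * (b12 0 + b21 0)
       + (R2 0 * (0 * u) - R1 0 * (0 * v)) * (u^2 + v^2) = 0"
      using tendsto_unique[OF trivial_limit_at_right_real El tendsto_eventually[OF evE]] .
    thus ?thesis unfolding b0 u_def[symmetric] v_def[symmetric] by (simp add: algebra_simps)
  qed
  have dt: "det (vector [vector [a, b], vector [c, d]] :: real^2^2) = a*d - b*c"
    by (simp add: det_2)
  have abd: "a = 0 \<and> d = 0 \<and> b = - c" using alg[OF key] detA dt by auto
  thus ?thesis using detA dt by (auto simp: power2_eq_square zero_less_mult_iff)
qed

end
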